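(* For each integer $r\ge3$, $\lambda(\mathbb T(y;r))\sim\dfrac{y^{r-1}}{(r-y)^{r-1}}$ as $y\to0^+$.
   Context: For an integer $r\ge 3$ and $y\in[0,1]$, set $L_y:=1/(r-y)$, let $\mathbb T=(\mathbb R/\mathbb Z)^r$ with normalized Lebesgue (Haar) measure $\lambda$, and let $\mathbb T(y;r)$ be the set of $x=(x_1,\dots,x_r)\in\mathbb T$ such that the arcs $x_t+[0,L_y]$, $1\le t\le r$, cover $\mathbb R/\mathbb Z$. *)

theory Defs
  imports "HOL-Analysis.Analysis" "HOL-Library.Landau_Symbols"
begin

text \<open>The torus (R/Z)^r is represented by the fundamental domain [0,1)^r inside real^'n,
  with r = CARD('n); normalized Haar measure = Lebesgue measure restricted to this cube
  (which has volume 1).\<close>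

definition arc_len :: "nat \<Rightarrow> real \<Rightarrow> real" where
  "arc_len r y = 1 / (real r - y)"

text \<open>The arc x_t + [0,L] (mod 1) contains the point z (mod 1) iff frac(z - x_t) \<le> L
  (for 0 \<le> L < 1). The arcs cover R/Z iff every real z lies in one of them.\<close>

definition arcs_cover :: "real \<Rightarrow> real^'n \<Rightarrow> bool" where
  "arcs_cover L x \<longleftrightarrow> (\<forall>z::real. \<exists>t. \<exists>s. 0 \<le> s \<and> s \<le> L \<and> (z - (x $ t + s)) \<in> \<int>)"

definition torus_cover_set :: "real \<Rightarrow> (real^'n) set" where
  "torus_cover_set y = {x. (\<forall>t. 0 \<le> x $ t \<and> x $ t < 1) \<and> arcs_cover (arc_len CARD('n) y) x}"

end

theory Submission imports Defs begin

definition chain :: "real \<Rightarrow> real set \<Rightarrow> real \<Rightarrow> bool" where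
  "chain L P e \<longleftrightarrow> (\<forall>p\<in>P. p + L < e \<longrightarrow> (\<exists>q\<in>P. p < q \<and> q \<le> p + L))"

lemma chain_insert_image:
  "chain L (insert a (u ` I)) e \<longleftrightarrow>
    (a + L < e \<longrightarrow> (\<exists>k\<in>I. a < u k \<and> u k \<le> a + L)) \<and>
    (\<forall>i\<in>I. u i + L < e \<longrightarrow> (u i < a \<and> a \<le> u i + L) \<or> (\<exists>k\<in>I. u i < u k \<and> u k \<le> u i + L))"
  unfolding chain_def by auto

lemma pred_lessI: assumes [measurable]: "f \<in> borel_measurable M" "g \<in> borel_measurable M"
  shows "Measurable.pred M (\<lambda>x. (f x::real) < g x)"
  by measurable
lemma pred_leI: assumes [measurable]: "f \<in> borel_measurable M" "g \<in> borel_measurable M"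
  shows "Measurable.pred M (\<lambda>x. (f x::real) \<le> g x)"
  by measurable
lemma pred_memI: assumes [measurable]: "f \<in> borel_measurable M" "B \<in> sets borel"
  shows "Measurable.pred M (\<lambda>x. (f x::real) \<in> B)"
  by measurable

lemma meas_set_gen:
  fixes I :: "'i set"
  assumes "finite I" and [measurable]: "\<And>i. i \<in> I \<Longrightarrow> B i \<in> sets borel"
    and am: "g \<in> borel_measurable (PiM I (\<lambda>_. lborel))" and em: "h \<in> borel_measurable (PiM I (\<lambda>_. lborel))"
    and qm: "Measurable.pred (PiM I (\<lambda>_. lborel)) Q"
  shows "{u \<in> space (PiM I (\<lambda>_. lborel)). (\<forall>i\<in>I. u i \<in> B i) \<and> Q u \<and> chain L (insert (g u) (u ` I)) (h u)}
     \<in> sets (PiM I (\<lambda>_. lborel))"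
proof -
  have [measurable]: "i \<in> I \<Longrightarrow> (\<lambda>u. u i) \<in> borel_measurable (PiM I (\<lambda>_. lborel))" for i
    by simp
  show ?thesis
  unfolding chain_insert_image using assms(1) am em qm 
  by (intro predE pred_intros_logic pred_intros_finite) (auto intro!: pred_lessI pred_leI pred_memI borel_measurable_add)
qed


lemma meas_set:
  fixes I :: "'i set"
  assumes "finite I" and [measurable]: "\<And>i. i \<in> I \<Longrightarrow> B i \<in> sets borel"
  shows "{u \<in> space (PiM I (\<lambda>_. lborel)). (\<forall>i\<in>I. u i \<in> B i) \<and> chain L (insert a (u ` I)) e}
     \<in> sets (PiM I (\<lambda>_. lborel))"
  using meas_set_gen[OF assms, where g="\<lambda>_. a" and h="\<lambda>_. e" and Q="\<lambda>_. True" and L=L] by simp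

lemma chain_max:
  assumes "\<forall>p\<in>P. p \<le> v" "v \<le> e"
  shows "chain L (insert v P) e \<longleftrightarrow> chain L P v \<and> e \<le> v + L"
proof
  assume c: "chain L (insert v P) e"
  have 1: "e \<le> v + L"
  proof (rule ccontr)
    assume "\<not> e \<le> v + L"
    then obtain q where "q \<in> insert v P" "v < q" using c unfolding chain_def by force
    then show False using assms by auto
  qed
  have "chain L P v" unfolding chain_def
  proof (intro ballI impI)
    fix p assume p: "p \<in> P" "p + L < v"
    then obtain q where q: "q \<in> insert v P" "p < q" "q \<le> p + L" using c assms unfolding chain_def by force
    then have "q \<noteq> v" using p by auto
    then show "\<exists>q\<in>P. p < q \<and> q \<le> p + L" using q by auto
  qed
  with 1 show "chain L P v \<and> e \<le> v + L" by simp
next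
  assume c: "chain L P v \<and> e \<le> v + L"
  show "chain L (insert v P) e" unfolding chain_def
  proof (intro ballI impI)
    fix p assume p: "p \<in> insert v P" "p + L < e"
    show "\<exists>q\<in>insert v P. p < q \<and> q \<le> p + L"
    proof (cases "p + L < v \<and> p \<noteq> v")
      case True
      then have "p \<in> P" using p by auto
      then show ?thesis using c True unfolding chain_def by auto
    next
      case False
      have "p \<le> v" using p assms by auto
      moreover have "p \<noteq> v" using p c by auto
      ultimately show ?thesis using False by force
    qed
  qed
qed

lemma slice_emeasure:
  fixes I :: "'i set" and X :: "('i \<Rightarrow> real) set" and A :: "real set"
  assumes I: "finite I" "j \<notin> I" and X: "X \<in> sets (PiM (insert j I) (\<lambda>_. lborel))"
    and A[measurable]: "A \<in> sets borel" and Y: "\<And>v. Y v \<in> sets (PiM I (\<lambda>_. lborel))"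
    and eq: "\<And>v u. u \<in> space (PiM I (\<lambda>_. lborel)) \<Longrightarrow> (u(j:=v) \<in> X) \<longleftrightarrow> (v \<in> A \<and> u \<in> Y v)"
  shows "emeasure (PiM (insert j I) (\<lambda>_. lborel)) X
     = (\<integral>\<^sup>+v. indicator A v * emeasure (PiM I (\<lambda>_. lborel)) (Y v) \<partial>lborel)"
proof -
  interpret product_sigma_finite "\<lambda>_::'i. lborel :: real measure" by standard
  have "emeasure (PiM (insert j I) (\<lambda>_. lborel)) X = nn_integral (PiM (insert j I) (\<lambda>_. lborel)) (indicator X)"
    using X by simp
  also have "\<dots> = (\<integral>\<^sup>+ v. \<integral>\<^sup>+ u. indicator X (u(j := v)) \<partial>(PiM I (\<lambda>_. lborel)) \<partial>lborel)"
    apply (rule product_nn_integral_insert_rev)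
    using I X by auto
  also have "\<dots> = (\<integral>\<^sup>+ v. \<integral>\<^sup>+ u. indicator A v * indicator (Y v) u \<partial>(PiM I (\<lambda>_. lborel)) \<partial>lborel)"
    apply (intro nn_integral_cong)
    subgoal for v u using eq[of u v] by (auto simp: indicator_def)
    done
  also have "\<dots> = (\<integral>\<^sup>+ v. indicator A v * (\<integral>\<^sup>+ u. indicator (Y v) u \<partial>(PiM I (\<lambda>_. lborel))) \<partial>lborel)"
    using Y by (subst nn_integral_cmult) auto
  also have "\<dots> = (\<integral>\<^sup>+v. indicator A v * emeasure (PiM I (\<lambda>_. lborel)) (Y v) \<partial>lborel)"
    using Y by (simp)
  finally show ?thesis .
qed


definition CS :: "real \<Rightarrow> 'i set \<Rightarrow> ('i \<Rightarrow> real set) \<Rightarrow> real \<Rightarrow> real \<Rightarrow> ('i \<Rightarrow> real) set" where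
  "CS L I B a e = {u \<in> space (PiM I (\<lambda>_. lborel)). (\<forall>i\<in>I. u i \<in> B i) \<and> chain L (insert a (u ` I)) e}"

lemma CS_sets: "finite I \<Longrightarrow> (\<And>i. i \<in> I \<Longrightarrow> B i \<in> sets borel) \<Longrightarrow> CS L I B a e \<in> sets (PiM I (\<lambda>_. lborel))"
  unfolding CS_def by (rule meas_set)

lemma space_PM_upd:
  assumes "u \<in> space (PiM I (\<lambda>_. lborel))" "j \<notin> I"
  shows "u(j := v) \<in> space (PiM (insert j I) (\<lambda>_. lborel :: real measure))"
  using assms by (auto simp: space_PiM PiE_def extensional_def)

lemma maxdec:
  fixes I :: "'i set" and \<rho> :: "'i \<Rightarrow> nat"
  assumes I: "finite I" "I \<noteq> {}" and inj: "inj_on \<rho> I"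
    and B: "\<And>i. i \<in> I \<Longrightarrow> B i \<in> sets borel" "\<And>i. i \<in> I \<Longrightarrow> B i \<subseteq> {a..e}"
  shows "emeasure (PiM I (\<lambda>_. lborel)) (CS L I B a e) =
    (\<Sum>j\<in>I. \<integral>\<^sup>+v. indicator (B j \<inter> {e-L..}) v *
        emeasure (PiM (I-{j}) (\<lambda>_. lborel)) (CS L (I-{j}) (\<lambda>i. B i \<inter> (if \<rho> i < \<rho> j then {..<v} else {..v})) a v) \<partial>lborel)"
proof -
  define D where "D j u \<longleftrightarrow> (\<forall>i\<in>I. u i \<le> u j \<and> (\<rho> i < \<rho> j \<longrightarrow> u i < u j))" for j and u :: "'i \<Rightarrow> real"
  define T where "T j = {u \<in> space (PiM I (\<lambda>_. lborel)). (\<forall>i\<in>I. u i \<in> B i) \<and> D j u \<and> chain L (insert a (u ` I)) e}" for j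
  have Tsets: "T j \<in> sets (PiM I (\<lambda>_. lborel))" if "j \<in> I" for j
  proof -
    have [measurable]: "i \<in> I \<Longrightarrow> (\<lambda>u. u i) \<in> borel_measurable (PiM I (\<lambda>_. lborel))" for i
      by simp
    have "Measurable.pred (PiM I (\<lambda>_. lborel)) (D j)"
      unfolding D_def using I(1) that
      by (intro pred_intros_logic pred_intros_finite) (auto intro!: pred_lessI pred_leI)
    then show ?thesis unfolding T_def
      by (intro meas_set_gen I B) auto
  qed
  have cover: "CS L I B a e = (\<Union>j\<in>I. T j)"
  proof (intro equalityI subsetI)
    fix u assume u: "u \<in> CS L I B a e"
    define Mx where "Mx = {j\<in>I. \<forall>i\<in>I. u i \<le> u j}"
    have "Max (u ` I) \<in> u ` I" using I by simp
    then obtain j0 where j0: "j0 \<in> I" "u j0 = Max (u ` I)" by auto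
    then have "j0 \<in> Mx" using I unfolding Mx_def by auto
    have fMx: "finite Mx" using I unfolding Mx_def by auto
    have "Min (\<rho> ` Mx) \<in> \<rho> ` Mx" using fMx \<open>j0 \<in> Mx\<close> by (intro Min_in) auto
    then obtain j where j: "j \<in> Mx" "\<rho> j = Min (\<rho> ` Mx)" by auto
    then have j: "j \<in> Mx" "\<forall>k\<in>Mx. \<rho> j \<le> \<rho> k" using fMx by auto
    have "D j u" unfolding D_def
    proof (intro ballI conjI impI)
      fix i assume i: "i \<in> I"
      show "u i \<le> u j" using j i unfolding Mx_def by auto
      assume "\<rho> i < \<rho> j"
      then have "i \<notin> Mx" using j by force
      then show "u i < u j" using i \<open>u i \<le> u j\<close> j unfolding Mx_def by force
    qed
    then show "u \<in> (\<Union>j\<in>I. T j)" using u j unfolding T_def CS_def Mx_def by auto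
  qed (auto simp: T_def CS_def)
  have disj: "disjoint_family_on T I"
    unfolding disjoint_family_on_def
  proof (intro ballI impI)
    fix j k assume jk: "j \<in> I" "k \<in> I" "j \<noteq> k"
    have "\<rho> j \<noteq> \<rho> k" using inj jk by (auto dest: inj_onD)
    then show "T j \<inter> T k = {}" unfolding T_def D_def using jk
      by (auto, (meson less_le_not_le linorder_neqE_nat)+)
  qed
  have "emeasure (PiM I (\<lambda>_. lborel)) (CS L I B a e) = (\<Sum>j\<in>I. emeasure (PiM I (\<lambda>_. lborel)) (T j))"
    unfolding cover using Tsets disj I by (subst sum_emeasure) auto
  also have "\<dots> = (\<Sum>j\<in>I. \<integral>\<^sup>+v. indicator (B j \<inter> {e-L..}) v *
        emeasure (PiM (I-{j}) (\<lambda>_. lborel)) (CS L (I-{j}) (\<lambda>i. B i \<inter> (if \<rho> i < \<rho> j then {..<v} else {..v})) a v) \<partial>lborel)"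
  proof (intro sum.cong refl)
    fix j assume j: "j \<in> I"
    have Ij: "insert j (I - {j}) = I" using j by auto
    have "emeasure (PiM (insert j (I-{j})) (\<lambda>_. lborel)) (T j) = (\<integral>\<^sup>+v. indicator (B j \<inter> {e-L..}) v *
        emeasure (PiM (I-{j}) (\<lambda>_. lborel)) (CS L (I-{j}) (\<lambda>i. B i \<inter> (if \<rho> i < \<rho> j then {..<v} else {..v})) a v) \<partial>lborel)"
    proof (rule slice_emeasure)
      show "finite (I - {j})" "j \<notin> I - {j}" using I by auto
      show "T j \<in> sets (PiM (insert j (I - {j})) (\<lambda>_. lborel))" using Tsets[OF j] Ij by simp
      show "B j \<inter> {e - L..} \<in> sets borel" using B j by auto
      show "CS L (I - {j}) (\<lambda>i. B i \<inter> (if \<rho> i < \<rho> j then {..<v} else {..v})) a v \<in> sets (PiM (I - {j}) (\<lambda>_. lborel))" for v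
        using I B by (intro CS_sets) auto
      fix v :: real and u :: "'i \<Rightarrow> real" assume u: "u \<in> space (PiM (I - {j}) (\<lambda>_. lborel))"
      have sp: "u(j:=v) \<in> space (PiM I (\<lambda>_. lborel))" using u j by (auto simp: space_PiM PiE_def extensional_def)
      have img: "(u(j:=v)) ` I = insert v (u ` (I - {j}))" using j by auto
      have ins: "insert a (insert v (u ` (I - {j}))) = insert v (insert a (u ` (I - {j})))" by auto
      show "(u(j:=v) \<in> T j) \<longleftrightarrow> (v \<in> B j \<inter> {e - L..} \<and>
             u \<in> CS L (I - {j}) (\<lambda>i. B i \<inter> (if \<rho> i < \<rho> j then {..<v} else {..v})) a v)"
      proof
        assume A: "u(j:=v) \<in> T j"
        then have vB: "v \<in> B j" and uB: "\<forall>i\<in>I-{j}. u i \<in> B i" and Dj: "D j (u(j:=v))"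
          using j unfolding T_def by (auto split: if_splits)
        have "chain L (insert a ((u(j:=v)) ` I)) e" using A unfolding T_def by auto
        then have ch: "chain L (insert v (insert a (u ` (I - {j})))) e" unfolding img ins .
        have le: "\<forall>p\<in>insert a (u ` (I - {j})). p \<le> v" using Dj vB B(2)[OF j] unfolding D_def
          by (auto split: if_splits)
        have "v \<le> e" using vB B(2)[OF j] by auto
        from chain_max[OF le this] ch have "chain L (insert a (u ` (I - {j}))) v" "e \<le> v + L" by auto
        then show "v \<in> B j \<inter> {e - L..} \<and>
             u \<in> CS L (I - {j}) (\<lambda>i. B i \<inter> (if \<rho> i < \<rho> j then {..<v} else {..v})) a v"
          using vB uB Dj u unfolding CS_def D_def by (auto split: if_splits)
      next
        assume A: "v \<in> B j \<inter> {e - L..} \<and>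
             u \<in> CS L (I - {j}) (\<lambda>i. B i \<inter> (if \<rho> i < \<rho> j then {..<v} else {..v})) a v"
        then have vB: "v \<in> B j" "e - L \<le> v" and uB: "\<forall>i\<in>I-{j}. u i \<in> B i \<and> (if \<rho> i < \<rho> j then u i < v else u i \<le> v)"
          and ch: "chain L (insert a (u ` (I - {j}))) v"
          unfolding CS_def by (auto split: if_splits)
        have le: "\<forall>p\<in>insert a (u ` (I - {j})). p \<le> v"
        proof
          fix p assume "p \<in> insert a (u ` (I - {j}))"
          then consider "p = a" | i where "i \<in> I - {j}" "p = u i" by auto
          then show "p \<le> v"
          proof cases
            case 1 then show ?thesis using vB B(2)[OF j] by auto
          next
            case 2
            then have "if \<rho> i < \<rho> j then u i < v else u i \<le> v" using uB by blast
            then show ?thesis using 2 by (auto split: if_splits)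
          qed
        qed
        have "v \<le> e" using vB B(2)[OF j] by auto
        from chain_max[OF le this] ch vB have ch2: "chain L (insert v (insert a (u ` (I - {j})))) e" by auto
        have "D j (u(j:=v))" unfolding D_def
        proof (intro ballI)
          fix i assume i: "i \<in> I"
          show "(u(j:=v)) i \<le> (u(j:=v)) j \<and> (\<rho> i < \<rho> j \<longrightarrow> (u(j:=v)) i < (u(j:=v)) j)"
          proof (cases "i = j")
            case False
            then have "i \<in> I - {j}" using i by auto
            then have "if \<rho> i < \<rho> j then u i < v else u i \<le> v" using uB by blast
            then show ?thesis using False by (auto split: if_splits)
          qed simp
        qed
        moreover have "chain L (insert a ((u(j:=v)) ` I)) e" unfolding img ins by (rule ch2)
        ultimately show "u(j:=v) \<in> T j" using sp vB uB unfolding T_def by auto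
      qed
    qed
    then show "emeasure (PiM I (\<lambda>_. lborel)) (T j) = (\<integral>\<^sup>+v. indicator (B j \<inter> {e-L..}) v *
        emeasure (PiM (I-{j}) (\<lambda>_. lborel)) (CS L (I-{j}) (\<lambda>i. B i \<inter> (if \<rho> i < \<rho> j then {..<v} else {..v})) a v) \<partial>lborel)"
      using Ij by simp
  qed
  finally show ?thesis .
qed


lemma int_poly:
  fixes C c d :: real
  assumes "d \<le> C"
  shows "(\<integral>\<^sup>+v. ennreal ((C - v)^k) * indicator {c..d} v \<partial>lborel) =
    ennreal (if c \<le> d then ((C - c)^(k+1) - (C - d)^(k+1)) / (k+1) else 0)"
proof (cases "c \<le> d")
  case True
  have "(\<integral>\<^sup>+v. ennreal ((C - v)^k) * indicator {c..d} v \<partial>lborel) =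
     ennreal ((\<lambda>v. - ((C - v)^(k+1) / (k+1))) d - (\<lambda>v. - ((C - v)^(k+1) / (k+1))) c)"
  proof (rule nn_integral_FTC_Icc)
    show "(\<lambda>v. (C - v)^k) \<in> borel_measurable borel" by measurable
    show "0 \<le> (C - x)^k" if "x \<in> {c..d}" for x using that assms by auto
    show "((\<lambda>v. - ((C - v)^(k+1) / (k+1))) has_real_derivative (C - x)^k) (at x)" for x
    proof -
      have d: "((\<lambda>v. (C - v)^(k+1)) has_real_derivative (real (k+1) * (C - x)^k * (-1))) (at x)"
        apply (auto intro!: derivative_eq_intros)
        apply (cases k)
         apply (auto simp: algebra_simps)
        done
      show ?thesis
        by (rule DERIV_cong[OF DERIV_minus[OF DERIV_cdivide[OF d, of "real (k + 1)"]]]) simp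
    qed
  qed fact
  moreover have "(\<lambda>v. - ((C - v)^(k+1) / (k+1))) d - (\<lambda>v. - ((C - v)^(k+1) / (k+1))) c
     = ((C - c)^(k+1) - (C - d)^(k+1)) / (k+1)"
    by (simp add: diff_divide_distrib)
  ultimately show ?thesis using True by simp
next
  case False
  then have "indicator {c..d} v = (0::ennreal)" for v by auto
  then show ?thesis using False by simp
qed

definition FF :: "real \<Rightarrow> nat \<Rightarrow> real \<Rightarrow> real" where
  "FF L m s = (if s \<le> (m+1)*L then ((m+1)*L - s)^m else 0)"

lemma Gform_aux:
  fixes I :: "'i set" and \<rho> :: "'i \<Rightarrow> nat"
  assumes "card I = n" "finite I" "inj_on \<rho> I" "L > 0" "real n * L \<le> s"
    "\<And>i. i \<in> I \<Longrightarrow> B i \<in> sets borel" "\<And>i. i \<in> I \<Longrightarrow> {a<..<a+s} \<subseteq> B i"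
    "\<And>i. i \<in> I \<Longrightarrow> B i \<subseteq> {a..a+s}"
  shows "emeasure (PiM I (\<lambda>_. lborel)) (CS L I B a (a+s)) = ennreal (FF L n s)"
  using assms
proof (induction n arbitrary: I B a s)
  case 0
  then have I: "I = {}" by auto
  show ?case
  proof (cases "s \<le> L")
    case True
    then have "CS L I B a (a+s) = {\<lambda>_. undefined}" unfolding CS_def chain_def I
      by (auto simp: PiM_empty)
    then show ?thesis using True I by (simp add: PiM_empty FF_def)
  next
    case False
    then have "CS L I B a (a+s) = {}" unfolding CS_def chain_def I
      by (auto simp: PiM_empty)
    then show ?thesis using False I by (simp add: FF_def)
  qed
next
  case (Suc k)
  note prems = Suc.prems
  have Ine: "I \<noteq> {}" using prems by auto
  let ?B' = "\<lambda>j v i. B i \<inter> (if \<rho> i < \<rho> j then {..<v} else {..v})"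
  have "emeasure (PiM I (\<lambda>_. lborel)) (CS L I B a (a+s)) =
    (\<Sum>j\<in>I. \<integral>\<^sup>+v. indicator (B j \<inter> {a+s-L..}) v *
        emeasure (PiM (I-{j}) (\<lambda>_. lborel)) (CS L (I-{j}) (?B' j v) a v) \<partial>lborel)"
    using prems Ine by (intro maxdec) auto
  also have "\<dots> = (\<Sum>j\<in>I. ennreal (FF L (Suc k) s / (k+1)))"
  proof (intro sum.cong refl)
    fix j assume j: "j \<in> I"
    have "(\<integral>\<^sup>+v. indicator (B j \<inter> {a+s-L..}) v *
        emeasure (PiM (I-{j}) (\<lambda>_. lborel)) (CS L (I-{j}) (?B' j v) a v) \<partial>lborel) =
        (\<integral>\<^sup>+v. indicator (B j \<inter> {a+s-L..}) v * ennreal (FF L k (v - a)) \<partial>lborel)"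
    proof (intro nn_integral_cong)
      fix v :: real
      show "indicator (B j \<inter> {a+s-L..}) v *
        emeasure (PiM (I-{j}) (\<lambda>_. lborel)) (CS L (I-{j}) (?B' j v) a v) =
        indicator (B j \<inter> {a+s-L..}) v * ennreal (FF L k (v - a))"
      proof (cases "v \<in> B j \<inter> {a+s-L..}")
        case True
        then have v: "a \<le> v" "v \<le> a + s" "a + s - L \<le> v" using prems(8)[OF j] by auto
        have "emeasure (PiM (I-{j}) (\<lambda>_. lborel)) (CS L (I-{j}) (?B' j v) a (a + (v - a))) = ennreal (FF L k (v - a))"
        proof (rule Suc.IH)
          show "card (I - {j}) = k" "finite (I - {j})" "inj_on \<rho> (I - {j})" "0 < L"
            using prems j by (auto intro: inj_on_subset)
          show "real k * L \<le> v - a" using prems(5) v by (simp add: algebra_simps)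
          fix i assume i: "i \<in> I - {j}"
          show "?B' j v i \<in> sets borel" using prems(6) i by auto
          show "{a<..<a + (v - a)} \<subseteq> ?B' j v i" using prems(7)[of i] i v by auto
          show "?B' j v i \<subseteq> {a..a + (v - a)}" using prems(8)[of i] i v by auto
        qed
        then show ?thesis by simp
      qed simp
    qed
    also have "\<dots> = (\<integral>\<^sup>+v. ennreal ((a + (k+1)*L - v)^k) * indicator {a+s-L..a+(k+1)*L} v \<partial>lborel)"
    proof (intro nn_integral_cong_AE)
      have "AE v in lborel. v \<noteq> a" "AE v in lborel. v \<noteq> a + s" by (rule AE_lborel_singleton)+
      then show "AE v in lborel. indicator (B j \<inter> {a+s-L..}) v * ennreal (FF L k (v - a)) =
          ennreal ((a + (k+1)*L - v)^k) * indicator {a+s-L..a+(k+1)*L} v"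
      proof eventually_elim
        case (elim v)
        have kL: "real k * L \<le> s - L" using prems(5) by (simp add: algebra_simps)
        have "v \<in> B j \<longleftrightarrow> a < v \<and> v < a + s" using prems(7)[OF j] prems(8)[OF j] elim by auto
        moreover have nn: "0 \<le> real k * L" using prems(4) by simp
        moreover have av: "a < v" if "a + s - L \<le> v"
        proof -
          have "a \<le> v" using that kL nn by linarith
          then show ?thesis using elim(1) by (simp add: order_less_le)
        qed
        moreover have vs: "v < a + s" if "v \<le> a + (k+1)*L"
        proof -
          have "v \<le> a + s" using that prems(5) by (simp add: algebra_simps)
          then show ?thesis using elim(2) by (simp add: order_less_le)
        qed
        ultimately show ?case unfolding FF_def
          by (cases "a + s - L \<le> v"; cases "v \<le> a + (k+1)*L") (auto simp: indicator_def algebra_simps)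
      qed
    qed
    also have "\<dots> = ennreal (FF L (Suc k) s / (k+1))"
      by (subst int_poly) (auto simp: algebra_simps FF_def)
    finally show "(\<integral>\<^sup>+v. indicator (B j \<inter> {a+s-L..}) v *
        emeasure (PiM (I-{j}) (\<lambda>_. lborel)) (CS L (I-{j}) (?B' j v) a v) \<partial>lborel) = ennreal (FF L (Suc k) s / (k+1))" .
  qed
  also have "\<dots> = of_nat (Suc k) * ennreal (FF L (Suc k) s / (k+1))"
    using prems(1) by simp
  also have "\<dots> = ennreal (real (Suc k) * (FF L (Suc k) s / (k+1)))"
    by (subst ennreal_mult') (auto simp: ennreal_of_nat_eq_real_of_nat)
  also have "\<dots> = ennreal (FF L (Suc k) s)"
  proof -
    have "real (Suc k) * (FF L (Suc k) s / (k+1)) = FF L (Suc k) s"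
      by (simp add: field_simps del: of_nat_Suc)
    then show ?thesis by simp
  qed
  finally show ?case .
qed


lemma inner_B:
  fixes I :: "'i set" and \<rho> :: "'i \<Rightarrow> nat"
  assumes I: "finite I" "card I = Suc m" and inj: "inj_on \<rho> I"
    and L: "L > 0" "0 \<le> y" "y < 1" "real (m+2) * L - y * L = 1"
    and a: "0 \<le> a" "a < 1"
    and B: "\<And>i. i \<in> I \<Longrightarrow> B i \<in> sets borel" "\<And>i. i \<in> I \<Longrightarrow> {a<..<1} \<subseteq> B i"
      "\<And>i. i \<in> I \<Longrightarrow> B i \<subseteq> {a..<1}"
  shows "emeasure (PiM I (\<lambda>_. lborel)) (CS L I B a (a+1)) =
     ennreal (if a \<le> L then (y*L)^(Suc m) - (max (a - (L - y*L)) 0)^(Suc m) else 0)"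
proof -
  define g where "g = (if a \<le> L then (y*L)^(Suc m) - (max (a - (L - y*L)) 0)^(Suc m) else 0)"
  have Ine: "I \<noteq> {}" using I by auto
  have yL: "y * L \<le> L" using L by simp
  have "real (m+2) * L = real m * L + 2*L" by (simp add: algebra_simps)
  then have mL: "real m * L \<le> 1 - L" using L(4) yL by linarith
  let ?B' = "\<lambda>j v i. B i \<inter> (if \<rho> i < \<rho> j then {..<v} else {..v})"
  have "emeasure (PiM I (\<lambda>_. lborel)) (CS L I B a (a+1)) =
    (\<Sum>j\<in>I. \<integral>\<^sup>+v. indicator (B j \<inter> {a+1-L..}) v *
        emeasure (PiM (I-{j}) (\<lambda>_. lborel)) (CS L (I-{j}) (?B' j v) a v) \<partial>lborel)"
    using I Ine inj B(1) proof (intro maxdec)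
      fix i assume "i \<in> I"
      moreover have "{a..<1} \<subseteq> {a..a+1}" using a by auto
      ultimately show "B i \<subseteq> {a..a+1}" using B(3)[of i] by blast
    qed auto
  also have "\<dots> = (\<Sum>j\<in>I. ennreal (g / Suc m))"
  proof (intro sum.cong refl)
    fix j assume j: "j \<in> I"
    have "(\<integral>\<^sup>+v. indicator (B j \<inter> {a+1-L..}) v *
        emeasure (PiM (I-{j}) (\<lambda>_. lborel)) (CS L (I-{j}) (?B' j v) a v) \<partial>lborel) =
        (\<integral>\<^sup>+v. indicator (B j \<inter> {a+1-L..}) v * ennreal (FF L m (v - a)) \<partial>lborel)"
    proof (intro nn_integral_cong)
      fix v :: real
      show "indicator (B j \<inter> {a+1-L..}) v *
        emeasure (PiM (I-{j}) (\<lambda>_. lborel)) (CS L (I-{j}) (?B' j v) a v) =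
        indicator (B j \<inter> {a+1-L..}) v * ennreal (FF L m (v - a))"
      proof (cases "v \<in> B j \<inter> {a+1-L..}")
        case True
        then have v: "a \<le> v" "v < 1" "a + 1 - L \<le> v" using B(3)[OF j] by auto
        have "emeasure (PiM (I-{j}) (\<lambda>_. lborel)) (CS L (I-{j}) (?B' j v) a (a + (v - a))) = ennreal (FF L m (v - a))"
        proof (rule Gform_aux)
          show "card (I - {j}) = m" "finite (I - {j})" "inj_on \<rho> (I - {j})" "0 < L"
            using I inj L j by (auto intro: inj_on_subset)
          show "real m * L \<le> v - a" using mL v by linarith
          fix i assume i: "i \<in> I - {j}"
          show "?B' j v i \<in> sets borel" using B(1) i by auto
          show "{a<..<a + (v - a)} \<subseteq> ?B' j v i" using B(2)[of i] i v by auto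
          show "?B' j v i \<subseteq> {a..a + (v - a)}" using B(3)[of i] i v by auto
        qed
        then show ?thesis by simp
      qed simp
    qed
    also have "\<dots> = (\<integral>\<^sup>+v. ennreal ((a + (m+1)*L - v)^m) * indicator {a+1-L..min 1 (a+(m+1)*L)} v \<partial>lborel)"
    proof (intro nn_integral_cong_AE)
      have "AE v in lborel. v \<noteq> a" "AE v in lborel. v \<noteq> 1" by (rule AE_lborel_singleton)+
      then show "AE v in lborel. indicator (B j \<inter> {a+1-L..}) v * ennreal (FF L m (v - a)) =
          ennreal ((a + (m+1)*L - v)^m) * indicator {a+1-L..min 1 (a+(m+1)*L)} v"
      proof eventually_elim
        case (elim v)
        have Bj: "v \<in> B j \<longleftrightarrow> a < v \<and> v < 1" using B(2)[OF j] B(3)[OF j] elim by auto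
        have av: "a < v" if "a + 1 - L \<le> v"
        proof -
          have "0 \<le> real m * L" using L by simp
          then have "a \<le> v" using that mL by linarith
          then show ?thesis using elim(1) by (simp add: order_less_le)
        qed
        show ?case unfolding FF_def using Bj av elim
          by (cases "a + 1 - L \<le> v"; cases "v \<le> a + (m+1)*L"; cases "v < 1")
            (auto simp: indicator_def algebra_simps)
      qed
    qed
    also have "\<dots> = ennreal (g / Suc m)"
    proof (subst int_poly)
      show "min 1 (a + real (m + 1) * L) \<le> a + real (m + 1) * L" by simp
      have e1: "a + real (m + 1) * L - (a + 1 - L) = y * L" using L by (simp add: algebra_simps)
      have e2: "a + real (m + 1) * L - min 1 (a + real (m + 1) * L) = max (a - (L - y*L)) 0"
        using L by (simp add: algebra_simps max_def min_def)
      have e3: "(a + 1 - L \<le> min 1 (a + real (m + 1) * L)) \<longleftrightarrow> a \<le> L"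
      proof -
        have "0 \<le> y * L" using L by simp
        then have h1: "1 \<le> real (m+2) * L" using L(4) by linarith
        have "real (m+2) * L = real (m+1) * L + L" by (simp add: algebra_simps)
        then have "a + 1 - L \<le> a + real (m+1)*L" using h1 by linarith
        then show ?thesis by (auto simp: min_def)
      qed
      show "ennreal (if a + 1 - L \<le> min 1 (a + real (m + 1) * L)
          then ((a + real (m + 1) * L - (a + 1 - L)) ^ (m + 1) - (a + real (m + 1) * L - min 1 (a + real (m + 1) * L)) ^ (m + 1)) / real (m + 1)
          else 0) = ennreal (g / real (Suc m))"
        unfolding e1 e2 e3 g_def by simp
    qed
    finally show "(\<integral>\<^sup>+v. indicator (B j \<inter> {a+1-L..}) v *
        emeasure (PiM (I-{j}) (\<lambda>_. lborel)) (CS L (I-{j}) (?B' j v) a v) \<partial>lborel) = ennreal (g / Suc m)" .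
  qed
  also have "\<dots> = of_nat (Suc m) * ennreal (g / Suc m)"
    using I by simp
  also have "\<dots> = ennreal (real (Suc m) * (g / Suc m))"
    by (subst ennreal_mult') (auto simp: ennreal_of_nat_eq_real_of_nat)
  also have "\<dots> = ennreal g"
  proof -
    have "real (Suc m) * (g / Suc m) = g"
      by (simp add: field_simps del: of_nat_Suc)
    then show ?thesis by simp
  qed
  finally show ?thesis unfolding g_def .
qed


lemma outer_int:
  assumes L: "L > 0" "0 \<le> y" "y < 1" "real (m+2) * L - y * L = 1"
  shows "(\<integral>\<^sup>+a. indicator {0..<1} a *
      ennreal (if a \<le> L then (y*L)^(Suc m) - (max (a - (L - y*L)) 0)^(Suc m) else 0) \<partial>lborel)
    = ennreal ((y*L)^(Suc m) / (m+2))"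
proof -
  define K where "K = (y*L)^(Suc m)"
  define c0 where "c0 = L - y*L"
  have yL0: "0 \<le> y*L" using L by simp
  have yL: "y*L \<le> L" using L by simp
  have c0: "0 \<le> c0" "c0 \<le> L" unfolding c0_def using yL yL0 by auto
  have "real (m+2) * L = real m * L + 2 * L" by (simp add: algebra_simps)
  moreover have "0 \<le> real m * L" using L by simp
  moreover have "y * L < L" using L(3) L(1) by simp
  ultimately have L1: "L < 1" using L(4) by linarith
  have "(\<integral>\<^sup>+a. indicator {0..<1} a *
      ennreal (if a \<le> L then (y*L)^(Suc m) - (max (a - (L - y*L)) 0)^(Suc m) else 0) \<partial>lborel)
    = (\<integral>\<^sup>+a. ennreal K * indicator {0..c0} a + ennreal (K - (a - c0)^(Suc m)) * indicator {c0..L} a \<partial>lborel)"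
  proof (intro nn_integral_cong_AE)
    have "AE a in lborel. a \<noteq> c0" by (rule AE_lborel_singleton)
    then show "AE a in lborel. indicator {0..<1} a *
      ennreal (if a \<le> L then (y*L)^(Suc m) - (max (a - (L - y*L)) 0)^(Suc m) else 0) =
      ennreal K * indicator {0..c0} a + ennreal (K - (a - c0)^(Suc m)) * indicator {c0..L} a"
    proof eventually_elim
      case (elim a)
      consider "a < 0" | "0 \<le> a" "a < c0" | "c0 < a" "a \<le> L" | "L < a" using elim by linarith
      then show ?case
      proof cases
        case 1 then show ?thesis using c0 by (auto simp: indicator_def)
      next
        case 2 then show ?thesis using c0 L1 unfolding K_def c0_def by (auto simp: indicator_def)
      next
        case 3 then show ?thesis using c0 L1 unfolding K_def c0_def by (auto simp: indicator_def)
      next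
        case 4 then show ?thesis using c0 L1 unfolding K_def c0_def by (auto simp: indicator_def)
      qed
    qed
  qed
  also have "\<dots> = (\<integral>\<^sup>+a. ennreal K * indicator {0..c0} a \<partial>lborel) +
      (\<integral>\<^sup>+a. ennreal (K - (a - c0)^(Suc m)) * indicator {c0..L} a \<partial>lborel)"
    by (rule nn_integral_add) auto
  also have "(\<integral>\<^sup>+a. ennreal K * indicator {0..c0} a \<partial>lborel) = ennreal (K * c0)"
  proof -
    have "(\<integral>\<^sup>+a. ennreal K * indicator {0..c0} a \<partial>lborel) = ennreal K * emeasure lborel {0..c0}"
      by (rule nn_integral_cmult_indicator) simp
    also have "\<dots> = ennreal K * ennreal c0" using c0 by simp
    also have "\<dots> = ennreal (K * c0)" using c0 yL0 unfolding K_def by (simp add: ennreal_mult)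
    finally show ?thesis .
  qed
  also have "(\<integral>\<^sup>+a. ennreal (K - (a - c0)^(Suc m)) * indicator {c0..L} a \<partial>lborel)
      = ennreal ((\<lambda>a. K * a - (a - c0)^(Suc m + 1) / (Suc m + 1)) L - (\<lambda>a. K * a - (a - c0)^(Suc m + 1) / (Suc m + 1)) c0)"
  proof (rule nn_integral_FTC_Icc)
    show "(\<lambda>a. K - (a - c0)^(Suc m)) \<in> borel_measurable borel" by measurable
    show "0 \<le> K - (x - c0)^(Suc m)" if "x \<in> {c0..L}" for x
    proof -
      have "(x - c0)^(Suc m) \<le> (y*L)^(Suc m)"
        using that unfolding c0_def by (intro power_mono) auto
      then show ?thesis unfolding K_def by simp
    qed
    show "((\<lambda>a. K * a - (a - c0)^(Suc m + 1) / (Suc m + 1)) has_real_derivative K - (x - c0)^(Suc m)) (at x)" for x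
    proof -
      have d: "((\<lambda>v. (v - c0)^(Suc m + 1)) has_real_derivative (real (Suc m + 1) * (x - c0)^(Suc m))) (at x)"
        by (rule DERIV_cong[OF DERIV_power[OF DERIV_diff[OF DERIV_ident DERIV_const]]]) simp
      show ?thesis
        by (rule DERIV_cong[OF DERIV_diff[OF DERIV_cmult[OF DERIV_ident] DERIV_cdivide[OF d, of "real (Suc m + 1)"]]])
          (simp del: of_nat_Suc)
    qed
  qed (use c0 in auto)
  also have "ennreal (K * c0) + ennreal ((\<lambda>a. K * a - (a - c0)^(Suc m + 1) / (Suc m + 1)) L - (\<lambda>a. K * a - (a - c0)^(Suc m + 1) / (Suc m + 1)) c0)
     = ennreal (K * c0 + ((\<lambda>a. K * a - (a - c0)^(Suc m + 1) / (Suc m + 1)) L - (\<lambda>a. K * a - (a - c0)^(Suc m + 1) / (Suc m + 1)) c0))"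
  proof (rule ennreal_plus[symmetric])
    show "0 \<le> K * c0" using c0 yL0 unfolding K_def by simp
    have "L - c0 = y * L" unfolding c0_def by simp
    have p: "0 \<le> (y*L)^(Suc m + 1)" using yL0 by simp
    have "(y*L)^(Suc m + 1) * 1 \<le> (y*L)^(Suc m + 1) * real (Suc m + 1)"
      by (rule mult_left_mono) (use p in auto)
    then have "(y*L)^(Suc m + 1) / real (Suc m + 1) \<le> (y*L)^(Suc m + 1)"
      by (simp add: divide_le_eq del: of_nat_Suc of_nat_add)
    then show "0 \<le> (\<lambda>a. K * a - (a - c0)^(Suc m + 1) / (Suc m + 1)) L - (\<lambda>a. K * a - (a - c0)^(Suc m + 1) / (Suc m + 1)) c0"
      unfolding K_def c0_def by (simp add: algebra_simps)
  qed
  also have "K * c0 + ((\<lambda>a. K * a - (a - c0)^(Suc m + 1) / (Suc m + 1)) L - (\<lambda>a. K * a - (a - c0)^(Suc m + 1) / (Suc m + 1)) c0)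
     = (y*L)^(Suc m) / (m+2)"
  proof -
    have lc: "L - c0 = y * L" unfolding c0_def by simp
    have "K * c0 + ((\<lambda>a. K * a - (a - c0)^(Suc m + 1) / (Suc m + 1)) L - (\<lambda>a. K * a - (a - c0)^(Suc m + 1) / (Suc m + 1)) c0)
       = K * c0 + K * (y*L) - K * (y*L) / (m+2)"
    proof -
      have p1: "(L - c0)^(Suc m + 1) = K * (y*L)" unfolding lc K_def by (simp only: power_add power_one_right)
      have p2: "(c0 - c0)^(Suc m + 1) = 0" by simp
      have p3: "real (Suc m + 1) = real m + 2" by simp
      show ?thesis by (simp only: p1 p2 p3) (simp add: algebra_simps c0_def)
    qed
    also have "\<dots> = K * (L - y * L / (m+2))" unfolding c0_def by (simp add: algebra_simps)
    also have "L - y * L / (m+2) = 1 / (m+2)"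
    proof -
      have q: "(real m + 2) * L - y*L = 1" using L(4) by (simp add: add.commute)
      have "L - y * L / (m+2) = ((real m + 2) * L - y*L) / (m+2)" by (simp add: field_simps)
      then show ?thesis using q by simp
    qed
    finally show ?thesis unfolding K_def by simp
  qed
  finally show ?thesis .
qed


lemma circle_PiM:
  fixes I :: "'i set"
  assumes I: "finite I" "card I = Suc (Suc m)"
    and L: "L > 0" "0 \<le> y" "y < 1" "real (m+2) * L - y * L = 1"
  shows "emeasure (PiM I (\<lambda>_. lborel))
     {u \<in> space (PiM I (\<lambda>_. lborel)). (\<forall>i\<in>I. u i \<in> {0..<1}) \<and> chain L (u ` I) (Min (u ` I) + 1)}
     = ennreal ((y*L)^(Suc m))"
proof -
  obtain \<rho> :: "'i \<Rightarrow> nat" and n where "\<rho> ` I = {i. i < n}" and inj: "inj_on \<rho> I"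
    using finite_imp_inj_to_nat_seg[OF I(1)] by blast
  define C where "C = {u \<in> space (PiM I (\<lambda>_. lborel)). (\<forall>i\<in>I. u i \<in> {0..<1}) \<and> chain L (u ` I) (Min (u ` I) + 1)}"
  define D where "D j u \<longleftrightarrow> (\<forall>i\<in>I. u j \<le> u i \<and> (\<rho> i < \<rho> j \<longrightarrow> u j < u i))" for j and u :: "'i \<Rightarrow> real"
  define T where "T j = {u \<in> space (PiM I (\<lambda>_. lborel)). (\<forall>i\<in>I. u i \<in> {0..<1}) \<and> D j u \<and> chain L (insert (u j) (u ` I)) (u j + 1)}" for j
  define Bm where "Bm j a i = {0..<1} \<inter> (if \<rho> i < \<rho> j then {a<..} else {a..})" for j and a :: real and i
  have Ine: "I \<noteq> {}" using I by auto
  have Tsets: "T j \<in> sets (PiM I (\<lambda>_. lborel))" if "j \<in> I" for j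
  proof -
    have [measurable]: "i \<in> I \<Longrightarrow> (\<lambda>u. u i) \<in> borel_measurable (PiM I (\<lambda>_. lborel))" for i
      by simp
    have "Measurable.pred (PiM I (\<lambda>_. lborel)) (D j)"
      unfolding D_def using I(1) that
      by (intro pred_intros_logic pred_intros_finite) (auto intro!: pred_lessI pred_leI)
    then show ?thesis unfolding T_def using that
      by (intro meas_set_gen I) auto
  qed
  have cover: "C = (\<Union>j\<in>I. T j)"
  proof (intro equalityI subsetI)
    fix u assume u: "u \<in> C"
    define Mn where "Mn = {j\<in>I. \<forall>i\<in>I. u j \<le> u i}"
    have "Min (u ` I) \<in> u ` I" using I Ine by simp
    then obtain j0 where j0: "j0 \<in> I" "u j0 = Min (u ` I)" by auto
    then have "j0 \<in> Mn" using I unfolding Mn_def by auto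
    have fMn: "finite Mn" using I unfolding Mn_def by auto
    have "Min (\<rho> ` Mn) \<in> \<rho> ` Mn" using fMn \<open>j0 \<in> Mn\<close> by (intro Min_in) auto
    then obtain j where j: "j \<in> Mn" "\<rho> j = Min (\<rho> ` Mn)" by auto
    then have j: "j \<in> Mn" "\<forall>k\<in>Mn. \<rho> j \<le> \<rho> k" using fMn by auto
    have "D j u" unfolding D_def
    proof (intro ballI conjI impI)
      fix i assume i: "i \<in> I"
      show "u j \<le> u i" using j i unfolding Mn_def by auto
      assume "\<rho> i < \<rho> j"
      then have "i \<notin> Mn" using j by force
      then show "u j < u i" using i \<open>u j \<le> u i\<close> j unfolding Mn_def by force
    qed
    moreover have "Min (u ` I) = u j"
      using j I(1) unfolding Mn_def by (intro Min_eqI) auto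
    moreover have "insert (u j) (u ` I) = u ` I" using j unfolding Mn_def by auto
    ultimately show "u \<in> (\<Union>j\<in>I. T j)" using u j unfolding T_def C_def Mn_def by auto
  next
    fix u assume "u \<in> (\<Union>j\<in>I. T j)"
    then obtain j where j: "j \<in> I" "u \<in> T j" by auto
    then have "Min (u ` I) = u j"
      using I(1) unfolding T_def D_def by (intro Min_eqI) auto
    moreover have "insert (u j) (u ` I) = u ` I" using j by auto
    ultimately show "u \<in> C" using j unfolding T_def C_def by auto
  qed
  have disj: "disjoint_family_on T I"
    unfolding disjoint_family_on_def
  proof (intro ballI impI)
    fix j k assume jk: "j \<in> I" "k \<in> I" "j \<noteq> k"
    have "\<rho> j \<noteq> \<rho> k" using inj jk by (auto dest: inj_onD)
    then show "T j \<inter> T k = {}" unfolding T_def D_def using jk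
      by (auto, (meson less_le_not_le linorder_neqE_nat)+)
  qed
  have "emeasure (PiM I (\<lambda>_. lborel)) C = (\<Sum>j\<in>I. emeasure (PiM I (\<lambda>_. lborel)) (T j))"
    unfolding cover using Tsets disj I by (subst sum_emeasure) auto
  also have "\<dots> = (\<Sum>j\<in>I. ennreal ((y*L)^(Suc m) / (m+2)))"
  proof (intro sum.cong refl)
    fix j assume j: "j \<in> I"
    have Ij: "insert j (I - {j}) = I" using j by auto
    have "emeasure (PiM (insert j (I-{j})) (\<lambda>_. lborel)) (T j) = (\<integral>\<^sup>+a. indicator {0..<1} a *
        emeasure (PiM (I-{j}) (\<lambda>_. lborel)) (CS L (I-{j}) (Bm j a) a (a+1)) \<partial>lborel)"
    proof (rule slice_emeasure)
      show "finite (I - {j})" "j \<notin> I - {j}" using I by auto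
      show "T j \<in> sets (PiM (insert j (I - {j})) (\<lambda>_. lborel))" using Tsets[OF j] Ij by simp
      show "{0..<1::real} \<in> sets borel" by simp
      show "CS L (I - {j}) (Bm j a) a (a+1) \<in> sets (PiM (I - {j}) (\<lambda>_. lborel))" for a
        using I by (intro CS_sets) (auto simp: Bm_def)
      fix a :: real and u :: "'i \<Rightarrow> real" assume u: "u \<in> space (PiM (I - {j}) (\<lambda>_. lborel))"
      have sp: "u(j:=a) \<in> space (PiM I (\<lambda>_. lborel))" using u j by (auto simp: space_PiM PiE_def extensional_def)
      have "(u(j:=a)) ` I = insert a (u ` (I - {j}))" using j by auto
      then have img: "insert a ((u(j:=a)) ` I) = insert a (u ` (I - {j}))" by simp
      have Dj: "D j (u(j:=a)) \<longleftrightarrow> (\<forall>i\<in>I-{j}. if \<rho> i < \<rho> j then a < u i else a \<le> u i)"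
      proof
        assume H: "D j (u(j:=a))"
        show "\<forall>i\<in>I-{j}. if \<rho> i < \<rho> j then a < u i else a \<le> u i"
        proof
          fix i assume i: "i \<in> I - {j}"
          then have "i \<in> I" "i \<noteq> j" by auto
          then have "a \<le> u i \<and> (\<rho> i < \<rho> j \<longrightarrow> a < u i)" using H unfolding D_def by fastforce
          then show "if \<rho> i < \<rho> j then a < u i else a \<le> u i" by simp
        qed
      next
        assume H: "\<forall>i\<in>I-{j}. if \<rho> i < \<rho> j then a < u i else a \<le> u i"
        show "D j (u(j:=a))" unfolding D_def
        proof
          fix i assume i: "i \<in> I"
          show "(u(j:=a)) j \<le> (u(j:=a)) i \<and> (\<rho> i < \<rho> j \<longrightarrow> (u(j:=a)) j < (u(j:=a)) i)"
          proof (cases "i = j")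
            case False
            then have "if \<rho> i < \<rho> j then a < u i else a \<le> u i" using H i by blast
            then show ?thesis using False by (auto split: if_splits)
          qed simp
        qed
      qed
      show "(u(j:=a) \<in> T j) \<longleftrightarrow> (a \<in> {0..<1} \<and> u \<in> CS L (I - {j}) (Bm j a) a (a+1))"
      proof
        assume A: "u(j:=a) \<in> T j"
        then have A1: "\<forall>i\<in>I. (u(j:=a)) i \<in> {0..<1}" and A2: "D j (u(j:=a))"
          and A3: "chain L (insert ((u(j:=a)) j) ((u(j:=a)) ` I)) ((u(j:=a)) j + 1)"
          unfolding T_def by blast+
        have "chain L (insert a ((u(j:=a)) ` I)) (a + 1)" using A3 by simp
        then have ch: "chain L (insert a (u ` (I - {j}))) (a + 1)" unfolding img .
        have "(u(j:=a)) j \<in> {0..<1}" using A1 j by blast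
        then have "a \<in> {0..<1}" by simp
        moreover have "\<forall>i\<in>I-{j}. u i \<in> Bm j a i"
        proof
          fix i assume i: "i \<in> I - {j}"
          have "(u(j:=a)) i \<in> {0..<1}" using A1 i by blast
          then have "u i \<in> {0..<1}" using i by auto
          moreover have "if \<rho> i < \<rho> j then a < u i else a \<le> u i" using A2 Dj i by blast
          ultimately show "u i \<in> Bm j a i" unfolding Bm_def by (auto split: if_splits)
        qed
        ultimately show "a \<in> {0..<1} \<and> u \<in> CS L (I - {j}) (Bm j a) a (a+1)"
          using u ch unfolding CS_def by auto
      next
        assume A: "a \<in> {0..<1} \<and> u \<in> CS L (I - {j}) (Bm j a) a (a+1)"
        then have ch: "chain L (insert a (u ` (I - {j}))) (a + 1)" and uB: "\<forall>i\<in>I-{j}. u i \<in> Bm j a i"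
          unfolding CS_def by auto
        have "D j (u(j:=a))" unfolding Dj
        proof
          fix i assume "i \<in> I - {j}"
          then show "if \<rho> i < \<rho> j then a < u i else a \<le> u i" using uB unfolding Bm_def by (auto split: if_splits)
        qed
        moreover have "\<forall>i\<in>I. (u(j:=a)) i \<in> {0..<1}" using uB A unfolding Bm_def by auto
        moreover have "chain L (insert ((u(j:=a)) j) ((u(j:=a)) ` I)) ((u(j:=a)) j + 1)"
          using ch img by simp
        ultimately show "u(j:=a) \<in> T j" using sp unfolding T_def by auto
      qed
    qed
    then have "emeasure (PiM I (\<lambda>_. lborel)) (T j) = (\<integral>\<^sup>+a. indicator {0..<1} a *
        emeasure (PiM (I-{j}) (\<lambda>_. lborel)) (CS L (I-{j}) (Bm j a) a (a+1)) \<partial>lborel)"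
      using Ij by simp
    also have "\<dots> = (\<integral>\<^sup>+a. indicator {0..<1} a *
      ennreal (if a \<le> L then (y*L)^(Suc m) - (max (a - (L - y*L)) 0)^(Suc m) else 0) \<partial>lborel)"
    proof (intro nn_integral_cong)
      fix a :: real
      show "indicator {0..<1} a * emeasure (PiM (I-{j}) (\<lambda>_. lborel)) (CS L (I-{j}) (Bm j a) a (a+1)) =
        indicator {0..<1} a * ennreal (if a \<le> L then (y*L)^(Suc m) - (max (a - (L - y*L)) 0)^(Suc m) else 0)"
      proof (cases "a \<in> {0..<1}")
        case True
        have "emeasure (PiM (I-{j}) (\<lambda>_. lborel)) (CS L (I-{j}) (Bm j a) a (a+1)) =
          ennreal (if a \<le> L then (y*L)^(Suc m) - (max (a - (L - y*L)) 0)^(Suc m) else 0)"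
        proof (rule inner_B)
          show "finite (I - {j})" "card (I - {j}) = Suc m" "inj_on \<rho> (I - {j})"
            using I j inj by (auto intro: inj_on_subset)
          show "0 \<le> a" "a < 1" using True by auto
          fix i assume "i \<in> I - {j}"
          show "Bm j a i \<in> sets borel" unfolding Bm_def by auto
          show "{a<..<1} \<subseteq> Bm j a i" "Bm j a i \<subseteq> {a..<1}" unfolding Bm_def using True by auto
        qed (use L in auto)
        then show ?thesis by simp
      qed simp
    qed
    also have "\<dots> = ennreal ((y*L)^(Suc m) / (m+2))"
      by (rule outer_int) (use L in auto)
    finally show "emeasure (PiM I (\<lambda>_. lborel)) (T j) = ennreal ((y*L)^(Suc m) / (m+2))" .
  qed
  also have "\<dots> = of_nat (Suc (Suc m)) * ennreal ((y*L)^(Suc m) / (m+2))"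
    using I by simp
  also have "\<dots> = ennreal (real (Suc (Suc m)) * ((y*L)^(Suc m) / (m+2)))"
    by (subst ennreal_mult') (auto simp: ennreal_of_nat_eq_real_of_nat)
  also have "\<dots> = ennreal ((y*L)^(Suc m))"
  proof -
    have "real (Suc (Suc m)) * ((y*L)^(Suc m) / (m+2)) = (y*L)^(Suc m)"
      by (simp add: field_simps del: of_nat_Suc)
    then show ?thesis by simp
  qed
  finally show ?thesis unfolding C_def .
qed


lemma Ints_between: "(k::real) \<in> \<int> \<Longrightarrow> -1 < k \<Longrightarrow> k < 1 \<Longrightarrow> k = 0"
  by (elim Ints_cases) auto

lemma arcs_iff:
  fixes P :: "real set"
  assumes P: "finite P" "P \<noteq> {}" "\<forall>p\<in>P. p < Min P + 1" and L: "0 < L" "L < 1"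
  shows "(\<forall>z::real. \<exists>p\<in>P. \<exists>s. 0 \<le> s \<and> s \<le> L \<and> z - (p + s) \<in> \<int>) \<longleftrightarrow> chain L P (Min P + 1)"
proof
  define a where "a = Min P"
  have aP: "a \<in> P" unfolding a_def using P by simp
  have amin: "\<forall>p\<in>P. a \<le> p" unfolding a_def using P by simp
  assume cov: "\<forall>z::real. \<exists>p\<in>P. \<exists>s. 0 \<le> s \<and> s \<le> L \<and> z - (p + s) \<in> \<int>"
  show "chain L P (Min P + 1)" unfolding chain_def a_def[symmetric]
  proof (intro ballI impI)
    fix p assume p: "p \<in> P" "p + L < a + 1"
    show "\<exists>q\<in>P. p < q \<and> q \<le> p + L"
    proof (rule ccontr)
      assume nq: "\<not> (\<exists>q\<in>P. p < q \<and> q \<le> p + L)"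
      define R where "R = {q\<in>P. p + L < q}"
      define m0 where "m0 = Min (insert (a+1) R)"
      have fR: "finite (insert (a+1) R)" using P unfolding R_def by auto
      have m0gt: "p + L < m0" unfolding m0_def using fR p unfolding R_def by auto
      have m0le: "m0 \<le> a + 1" unfolding m0_def using fR by auto
      have m0R: "\<forall>q\<in>R. m0 \<le> q" unfolding m0_def using fR by auto
      define z where "z = (p + L + m0) / 2"
      have z: "p + L < z" "z < m0" unfolding z_def using m0gt by auto
      obtain t s where t: "t \<in> P" "0 \<le> s" "s \<le> L" "z - (t + s) \<in> \<int>" using cov by blast
      have "a \<le> t" "t < a + 1" using t(1) amin P(3) unfolding a_def by auto
      moreover have "a \<le> p" using p amin by auto
      ultimately have "z - (t + s) = 0" using z m0le t
        by (intro Ints_between) auto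
      then have tz: "t = z - s" by simp
      then have "p < t" using z t by auto
      then have "p + L < t" using nq t(1) by force
      then have "t \<in> R" using t(1) unfolding R_def by auto
      then show False using m0R tz z t by force
    qed
  qed
next
  define a where "a = Min P"
  have aP: "a \<in> P" unfolding a_def using P by simp
  have amin: "\<forall>p\<in>P. a \<le> p" unfolding a_def using P by simp
  assume ch: "chain L P (Min P + 1)"
  show "\<forall>z::real. \<exists>p\<in>P. \<exists>s. 0 \<le> s \<and> s \<le> L \<and> z - (p + s) \<in> \<int>"
  proof
    fix z :: real
    define z' where "z' = z - of_int \<lfloor>z - a\<rfloor>"
    have z': "a \<le> z'" "z' < a + 1" unfolding z'_def by linarith+
    have zz: "z - z' \<in> \<int>" unfolding z'_def by simp
    define Q where "Q = {p\<in>P. p \<le> z'}"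
    have fQ: "finite Q" "a \<in> Q" using P aP z' unfolding Q_def by auto
    define p0 where "p0 = Max Q"
    have "Q \<noteq> {}" using fQ by auto
    then have "p0 \<in> Q" using fQ(1) Max_in[of Q] unfolding p0_def by auto
    then have p0: "p0 \<in> P" "p0 \<le> z'" unfolding Q_def by auto
    have p0max: "\<forall>q\<in>Q. q \<le> p0" unfolding p0_def using fQ by auto
    show "\<exists>p\<in>P. \<exists>s. 0 \<le> s \<and> s \<le> L \<and> z - (p + s) \<in> \<int>"
    proof (cases "z' \<le> p0 + L")
      case True
      then show ?thesis using p0 zz by (intro bexI[of _ p0] exI[of _ "z' - p0"]) auto
    next
      case False
      then have "p0 + L < Min P + 1" using z' unfolding a_def by auto
      then obtain q where q: "q \<in> P" "p0 < q" "q \<le> p0 + L" using ch p0 unfolding chain_def by blast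
      then have "q \<in> Q" using False unfolding Q_def by auto
      then show ?thesis using p0max q by force
    qed
  qed
qed


lemma min_plus_iff:
  fixes x :: "real^'n::finite"
  shows "(\<forall>t'. c < x$t' + 1) \<longleftrightarrow> c < Min (range (\<lambda>t. x$t)) + 1"
proof -
  have "c < Min (range (\<lambda>t. x$t)) + 1 \<longleftrightarrow> c - 1 < Min (range (\<lambda>t. x$t))" by linarith
  also have "\<dots> \<longleftrightarrow> (\<forall>p\<in>range (\<lambda>t. x$t). c - 1 < p)" by (rule Min_gr_iff) auto
  also have "\<dots> \<longleftrightarrow> (\<forall>t'. c < x$t' + 1)" by (simp add: diff_less_eq)
  finally show ?thesis by simp
qed

lemma vec_measure_exact:
  assumes m: "CARD('n::finite) = Suc (Suc m)" and y: "0 < y" "y < 1"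
  shows "measure lborel (torus_cover_set y :: (real^'n) set) = y ^ (CARD('n) - 1) / (real CARD('n) - y) ^ (CARD('n) - 1)"
proof -
  define L where "L = arc_len CARD('n) y"
  have Ldef: "L = 1 / (real (m+2) - y)" using m by (simp add: L_def arc_len_def)
  have pos: "real (m+2) - y > 1" using y by simp
  have L0: "L > 0" using pos unfolding Ldef by simp
  have L1: "L < 1" using pos unfolding Ldef by (simp add: field_simps)
  have ne: "real (m+2) - y \<noteq> 0" using pos by simp
  have "real (m+2) * L - y * L = (real (m+2) - y) * L" by (simp add: algebra_simps)
  also have "\<dots> = 1" unfolding Ldef using ne by simp
  finally have Leq: "real (m+2) * L - y * L = 1" .
  define \<phi> where "\<phi> = (\<lambda>f::(real^'n) \<Rightarrow> real. \<Sum>b\<in>Basis. f b *\<^sub>R b)"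
  have BasisR: "(Basis :: (real^'n) set) = range (\<lambda>t. axis t 1)" by (auto simp: Basis_vec_def)
  have comp: "\<phi> f $ t = f (axis t 1)" for f t
  proof -
    have ax: "axis t (1::real) \<in> Basis" unfolding BasisR by auto
    have "\<phi> f $ t = \<phi> f \<bullet> axis t 1" by (simp add: inner_axis)
    also have "\<dots> = (\<Sum>b\<in>Basis. f b * (b \<bullet> axis t 1))" unfolding \<phi>_def by (simp add: inner_sum_left)
    also have "\<dots> = (\<Sum>b\<in>Basis. if b = axis t 1 then f b else 0)"
      using ax by (intro sum.cong refl) (simp add: inner_Basis)
    also have "\<dots> = f (axis t 1)" using ax by simp
    finally show ?thesis .
  qed
  have rng: "range (\<lambda>t. \<phi> f $ t) = f ` Basis" for f unfolding comp BasisR by auto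
  have arcs: "arcs_cover L x \<longleftrightarrow> chain L (range (\<lambda>t. x$t)) (Min (range (\<lambda>t. x$t)) + 1)"
    if x: "\<forall>t. 0 \<le> x$t \<and> x$t < 1" for x :: "real^'n"
  proof -
    have "arcs_cover L x \<longleftrightarrow> (\<forall>z::real. \<exists>p\<in>range (\<lambda>t. x$t). \<exists>s. 0 \<le> s \<and> s \<le> L \<and> z - (p + s) \<in> \<int>)"
      unfolding arcs_cover_def by auto
    also have "\<dots> \<longleftrightarrow> chain L (range (\<lambda>t. x$t)) (Min (range (\<lambda>t. x$t)) + 1)"
    proof (rule arcs_iff)
      show "finite (range (\<lambda>t. x$t))" "range (\<lambda>t. x$t) \<noteq> {}" by auto
      have m0: "0 \<le> Min (range (\<lambda>t. x$t))" using x by (subst Min_ge_iff) auto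
      show "\<forall>p\<in>range (\<lambda>t. x$t). p < Min (range (\<lambda>t. x$t)) + 1"
      proof
        fix p assume "p \<in> range (\<lambda>t. x$t)"
        then obtain t where pt: "p = x$t" by auto
        have "x$t < 1" using x by blast
        then show "p < Min (range (\<lambda>t. x$t)) + 1" using pt m0 by linarith
      qed
    qed (use L0 L1 in auto)
    finally show ?thesis .
  qed
  define T' where "T' = {x::real^'n. (\<forall>t. 0 \<le> x$t \<and> x$t < 1) \<and>
     (\<forall>t. (\<forall>t'. x$t + L < x$t' + 1) \<longrightarrow> (\<exists>t''. x$t < x$t'' \<and> x$t'' \<le> x$t + L))}"
  have T_eq: "torus_cover_set y = T'"
  proof (intro equalityI subsetI)
    fix x :: "real^'n" assume "x \<in> torus_cover_set y"
    then have x: "\<forall>t. 0 \<le> x$t \<and> x$t < 1" and c: "chain L (range (\<lambda>t. x$t)) (Min (range (\<lambda>t. x$t)) + 1)"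
      using arcs unfolding torus_cover_set_def L_def by auto
    have "(\<forall>t'. x$t + L < x$t' + 1) \<longleftrightarrow> x$t + L < Min (range (\<lambda>t. x$t)) + 1" for t
      by (rule min_plus_iff)
    then show "x \<in> T'" using x c unfolding T'_def chain_def by auto
  next
    fix x :: "real^'n" assume "x \<in> T'"
    then have x: "\<forall>t. 0 \<le> x$t \<and> x$t < 1"
      and c: "\<forall>t. (\<forall>t'. x$t + L < x$t' + 1) \<longrightarrow> (\<exists>t''. x$t < x$t'' \<and> x$t'' \<le> x$t + L)"
      unfolding T'_def by auto
    have "(\<forall>t'. x$t + L < x$t' + 1) \<longleftrightarrow> x$t + L < Min (range (\<lambda>t. x$t)) + 1" for t
      by (rule min_plus_iff)
    then have "chain L (range (\<lambda>t. x$t)) (Min (range (\<lambda>t. x$t)) + 1)"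
      using c unfolding chain_def by auto
    then show "x \<in> torus_cover_set y" using x arcs unfolding torus_cover_set_def L_def by auto
  qed
  have T_meas: "T' \<in> sets borel"
  proof -
    have [measurable]: "(\<lambda>x::real^'n. x$t) \<in> borel_measurable borel" for t
      by (intro borel_measurable_continuous_onI continuous_intros)
    have "Measurable.pred borel (\<lambda>x::real^'n. (\<forall>t. 0 \<le> x$t \<and> x$t < 1) \<and>
     (\<forall>t. (\<forall>t'. x$t + L < x$t' + 1) \<longrightarrow> (\<exists>t''. x$t < x$t'' \<and> x$t'' \<le> x$t + L)))"
      by (intro pred_intros_logic pred_intros_countable) (auto intro!: pred_lessI pred_leI borel_measurable_add)
    then have "{x::real^'n \<in> space borel. (\<forall>t. 0 \<le> x$t \<and> x$t < 1) \<and>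
     (\<forall>t. (\<forall>t'. x$t + L < x$t' + 1) \<longrightarrow> (\<exists>t''. x$t < x$t'' \<and> x$t'' \<le> x$t + L))} \<in> sets borel"
      by (rule predE)
    then show ?thesis unfolding T'_def by simp
  qed
  have phim: "\<phi> \<in> measurable (PiM Basis (\<lambda>_. lborel)) borel" unfolding \<phi>_def by measurable
  have "emeasure lborel T' = emeasure (distr (PiM Basis (\<lambda>_. lborel)) borel \<phi>) T'"
    unfolding \<phi>_def by (simp add: lborel_eq[symmetric])
  also have "\<dots> = emeasure (PiM Basis (\<lambda>_. lborel)) (\<phi> -` T' \<inter> space (PiM Basis (\<lambda>_. lborel)))"
    by (rule emeasure_distr[OF phim T_meas])
  also have "\<phi> -` T' \<inter> space (PiM Basis (\<lambda>_. lborel)) =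
     {u \<in> space (PiM Basis (\<lambda>_. lborel)). (\<forall>i\<in>Basis. u i \<in> {0..<1}) \<and> chain L (u ` Basis) (Min (u ` Basis) + 1)}"
  proof -
    have "\<phi> f \<in> T' \<longleftrightarrow> (\<forall>i\<in>Basis. f i \<in> {0..<1}) \<and> chain L (f ` Basis) (Min (f ` Basis) + 1)" for f
    proof -
      have "\<phi> f \<in> T' \<longleftrightarrow> \<phi> f \<in> torus_cover_set y" unfolding T_eq ..
      also have "\<dots> \<longleftrightarrow> (\<forall>t. 0 \<le> \<phi> f $ t \<and> \<phi> f $ t < 1) \<and> arcs_cover L (\<phi> f)"
        unfolding torus_cover_set_def L_def by simp
      also have "\<dots> \<longleftrightarrow> (\<forall>t. 0 \<le> \<phi> f $ t \<and> \<phi> f $ t < 1) \<and> chain L (range (\<lambda>t. \<phi> f $ t)) (Min (range (\<lambda>t. \<phi> f $ t)) + 1)"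
        using arcs by blast
      also have "\<dots> \<longleftrightarrow> (\<forall>i\<in>Basis. f i \<in> {0..<1}) \<and> chain L (f ` Basis) (Min (f ` Basis) + 1)"
      proof -
        have b: "(\<forall>t. 0 \<le> f (axis t 1) \<and> f (axis t 1) < 1) \<longleftrightarrow> (\<forall>i\<in>Basis. f i \<in> {0..<1})"
          unfolding BasisR by auto
        have rng2: "range (\<lambda>t. f (axis t 1)) = f ` Basis" unfolding BasisR by auto
        show ?thesis by (simp only: rng comp b rng2)
      qed
      finally show ?thesis .
    qed
    then show ?thesis by auto
  qed
  also have "emeasure (PiM (Basis :: (real^'n) set) (\<lambda>_. lborel))
     {u \<in> space (PiM Basis (\<lambda>_. lborel)). (\<forall>i\<in>Basis. u i \<in> {0..<1}) \<and> chain L (u ` Basis) (Min (u ` Basis) + 1)}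
     = ennreal ((y*L)^(Suc m))"
    by (rule circle_PiM) (use m L0 y Leq in auto)
  finally have "emeasure lborel (torus_cover_set y :: (real^'n) set) = ennreal ((y*L)^(Suc m))"
    unfolding T_eq .
  then have "measure lborel (torus_cover_set y :: (real^'n) set) = (y*L)^(Suc m)"
    using y L0 by (simp add: measure_def)
  also have "\<dots> = y ^ (CARD('n) - 1) / (real CARD('n) - y) ^ (CARD('n) - 1)"
    using m by (simp add: L_def arc_len_def power_divide)
  finally show ?thesis .
qed

theorem lemma5p2:
  assumes "CARD('n::finite) \<ge> 3"
  shows "(\<lambda>y. measure lborel (torus_cover_set y :: (real^'n) set))
           \<sim>[at_right 0] (\<lambda>y. y ^ (CARD('n) - 1) / (real CARD('n) - y) ^ (CARD('n) - 1))"
proof -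
  obtain m where m: "CARD('n) = Suc (Suc m)" using assms
    by (intro that[of "CARD('n) - 2"]) simp
  have "eventually (\<lambda>y. y \<in> {0<..<1}) (at_right (0::real))" by (rule eventually_at_right_real) simp
  then have "eventually (\<lambda>y. measure lborel (torus_cover_set y :: (real^'n) set) =
     y ^ (CARD('n) - 1) / (real CARD('n) - y) ^ (CARD('n) - 1)) (at_right 0)"
    by eventually_elim (use vec_measure_exact[OF m] in auto)
  then show ?thesis by (rule asymp_equiv_refl_ev)
qed

end
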